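(* Let $\sigma:\mathcal A^*\to\mathcal B^*$ be a non-erasing morphism of free monoids over finite alphabets and $X\subseteq\mathcal A^{\mathbb Z}$ a subshift. If $\sigma$ is recognizable in $X$, then the measure transfer map $\sigma^{\mathcal M}_X:\mathcal M(X)\to\mathcal M(\sigma(X))$, $\mu\mapsto\mu^\sigma$, is injective.
   Context: $\mathcal M(X)$ denotes the set of finite shift-invariant Borel measures on $\mathcal A^{\mathbb Z}$ with support in $X$. For a word $w$, the cylinder $[w]$ is $\{\mathbf x:\mathbf x_{[1,|w|]}=w\}$. Measure transfer: let $\mathcal A_\sigma=\{a(k):a\in\mathcal A,1\le k\le|\sigma(a)|\}$, $\pi_\sigma(a)=a(1)\cdots a(|\sigma(a)|)$, $\alpha_\sigma(a(k))=$ the $k$-th letter of $\sigma(a)$. For $w\in\mathcal A_\sigma^*$ let $\widehat w\in\mathcal A^*$ be the (unique) shortest word such that $\pi_\sigma(\widehat w)$ contains $w$ as a factor, and set $\mu([\widehat w])=0$ if none exists. For an invariant measure $\mu$ on $\mathcal A^{\mathbb Z}$ the transferred measure $\mu^\sigma=\sigma^{\mathcal M}(\mu)$ is the invariant measure on $\mathcal B^{\mathbb Z}$ with $\mu^\sigma([w'])=\sum_{w\in\mathcal A_\sigma^*,\ \alpha_\sigma(w)=w'}\mu([\widehat w])$ for all $w'\in\mathcal B^*$; it maps $\mathcal M(X)$ into $\mathcal M(\sigma(X))$, where $\sigma(X)$ is the image subshift (smallest subshift containing $\sigma^{\mathbb Z}(X)$, with $\sigma^{\mathbb Z}(\mathbf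 x)_{[1,\infty)}=\sigma(x_1)\sigma(x_2)\cdots$). $\sigma$ is recognizable in $X$ if: whenever $\mathbf x,\mathbf x'\in X$, $\mathbf y\in\mathcal B^{\mathbb Z}$ satisfy $\mathbf y=T^k(\sigma^{\mathbb Z}(\mathbf x))=T^\ell(\sigma^{\mathbb Z}(\mathbf x'))$ with $0\le k<|\sigma(x_1)|$, $0\le\ell<|\sigma(x'_1)|$ ($T$ the shift), then $\mathbf x=\mathbf x'$ and $k=\ell$. *)

theory Defs
  imports "HOL-Analysis.Analysis" "HOL-Library.Sublist"
begin

definition shift :: "(int \<Rightarrow> 'a) \<Rightarrow> (int \<Rightarrow> 'a)" where
  "shift x = (\<lambda>i. x (i + 1))"

text \<open>Closedness in the product of discrete topologies, written out.\<close>
definition seq_closed :: "(int \<Rightarrow> 'a) set \<Rightarrow> bool" where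
  "seq_closed X \<longleftrightarrow>
     (\<forall>x. (\<forall>n::nat. \<exists>y\<in>X. \<forall>i. \<bar>i\<bar> \<le> int n \<longrightarrow> y i = x i) \<longrightarrow> x \<in> X)"

definition subshift :: "(int \<Rightarrow> 'a) set \<Rightarrow> bool" where
  "subshift X \<longleftrightarrow> seq_closed X \<and> shift ` X = X"

definition cyl :: "'a list \<Rightarrow> (int \<Rightarrow> 'a) set" where
  "cyl w = {x. \<forall>i<length w. x (int i + 1) = w ! i}"

text \<open>Borel sigma-algebra of A^Z (product of discrete finite spaces).\<close>
definition seq_space :: "(int \<Rightarrow> 'a) measure" where
  "seq_space = Pi\<^sub>M UNIV (\<lambda>_. count_space UNIV)"

definition shift_invariant :: "(int \<Rightarrow> 'a) measure \<Rightarrow> bool" where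
  "shift_invariant \<mu> \<longleftrightarrow> (\<forall>A\<in>sets \<mu>. emeasure \<mu> (shift -` A) = emeasure \<mu> A)"

definition inv_measures :: "(int \<Rightarrow> 'a) set \<Rightarrow> (int \<Rightarrow> 'a) measure set" where
  "inv_measures X = {\<mu>. sets \<mu> = sets seq_space \<and> finite_measure \<mu> \<and>
                        shift_invariant \<mu> \<and> (AE x in \<mu>. x \<in> X)}"

text \<open>A morphism sigma : A^* -> B^* is given by its letter images; it acts on
  words by concatenation.\<close>
definition morph :: "('a \<Rightarrow> 'b list) \<Rightarrow> 'a list \<Rightarrow> 'b list" where
  "morph \<sigma> u = concat (map \<sigma> u)"

definition non_erasing :: "('a \<Rightarrow> 'b list) \<Rightarrow> bool" where
  "non_erasing \<sigma> \<longleftrightarrow> (\<forall>a. \<sigma> a \<noteq> [])"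

text \<open>Starting positions: the word sigma(x_n) occupies positions
  pos x n + 1, ..., pos x n + |sigma(x_n)|, with pos x 1 = 0.\<close>
definition pos :: "('a \<Rightarrow> 'b list) \<Rightarrow> (int \<Rightarrow> 'a) \<Rightarrow> int \<Rightarrow> int" where
  "pos \<sigma> x n = (if n \<ge> 1 then (\<Sum>k\<in>{1..<n}. int (length (\<sigma> (x k))))
                 else - (\<Sum>k\<in>{n..0}. int (length (\<sigma> (x k)))))"

text \<open>sigma^Z(x): the bi-infinite concatenation with
  sigma^Z(x)_[1,oo) = sigma(x_1) sigma(x_2) ...\<close>
definition sigmaZ :: "('a \<Rightarrow> 'b list) \<Rightarrow> (int \<Rightarrow> 'a) \<Rightarrow> (int \<Rightarrow> 'b)" where
  "sigmaZ \<sigma> x = (\<lambda>j. let n = (THE n. pos \<sigma> x n < j \<and> j \<le> pos \<sigma> x (n + 1))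
                     in \<sigma> (x n) ! nat (j - pos \<sigma> x n - 1))"

definition recognizable :: "('a \<Rightarrow> 'b list) \<Rightarrow> (int \<Rightarrow> 'a) set \<Rightarrow> bool" where
  "recognizable \<sigma> X \<longleftrightarrow>
     (\<forall>x\<in>X. \<forall>x'\<in>X. \<forall>k l.
        k < length (\<sigma> (x 1)) \<and> l < length (\<sigma> (x' 1)) \<and>
        (shift ^^ k) (sigmaZ \<sigma> x) = (shift ^^ l) (sigmaZ \<sigma> x')
        \<longrightarrow> x = x' \<and> k = l)"

text \<open>A_sigma = {a(k) : 1 <= k <= |sigma(a)|}, letter a(k) encoded as (a,k).\<close>
definition Asig :: "('a \<Rightarrow> 'b list) \<Rightarrow> ('a \<times> nat) set" where
  "Asig \<sigma> = {(a, k). 1 \<le> k \<and> k \<le> length (\<sigma> a)}"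

definition pi_sig :: "('a \<Rightarrow> 'b list) \<Rightarrow> 'a \<Rightarrow> ('a \<times> nat) list" where
  "pi_sig \<sigma> a = map (\<lambda>k. (a, k)) [1..<length (\<sigma> a) + 1]"

definition pi_word :: "('a \<Rightarrow> 'b list) \<Rightarrow> 'a list \<Rightarrow> ('a \<times> nat) list" where
  "pi_word \<sigma> u = concat (map (pi_sig \<sigma>) u)"

definition alpha_sig :: "('a \<Rightarrow> 'b list) \<Rightarrow> ('a \<times> nat) \<Rightarrow> 'b" where
  "alpha_sig \<sigma> p = \<sigma> (fst p) ! (snd p - 1)"

definition hat_measure ::
  "('a \<Rightarrow> 'b list) \<Rightarrow> (int \<Rightarrow> 'a) measure \<Rightarrow> ('a \<times> nat) list \<Rightarrow> ennreal" where
  "hat_measure \<sigma> \<mu> w =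
     (if \<exists>u. sublist w (pi_word \<sigma> u)
      then emeasure \<mu> (cyl (ARG_MIN length u. sublist w (pi_word \<sigma> u)))
      else 0)"

definition is_transfer ::
  "('a \<Rightarrow> 'b list) \<Rightarrow> (int \<Rightarrow> 'a) measure \<Rightarrow> (int \<Rightarrow> 'b) measure \<Rightarrow> bool" where
  "is_transfer \<sigma> \<mu> \<nu> \<longleftrightarrow>
     sets \<nu> = sets seq_space \<and> finite_measure \<nu> \<and> shift_invariant \<nu> \<and>
     (\<forall>w'. w' \<noteq> [] \<longrightarrow>
        emeasure \<nu> (cyl w') =
          (\<Sum>w\<in>{w. set w \<subseteq> Asig \<sigma> \<and> map (alpha_sig \<sigma>) w = w'}. hat_measure \<sigma> \<mu> w))"

end

theory Submission
  imports Defs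
begin

definition link :: "('a \<Rightarrow> 'b list) \<Rightarrow> 'a \<times> nat \<Rightarrow> 'a \<times> nat \<Rightarrow> bool" where
  "link \<sigma> p q \<longleftrightarrow> (fst q = fst p \<and> snd q = Suc (snd p)) \<or> (snd p = length (\<sigma> (fst p)) \<and> snd q = 1)"

definition consw :: "('a \<Rightarrow> 'b list) \<Rightarrow> ('a \<times> nat) list \<Rightarrow> bool" where
  "consw \<sigma> w \<longleftrightarrow> set w \<subseteq> Asig \<sigma> \<and> successively (link \<sigma>) w"

definition kfilter :: "('a \<times> nat) list \<Rightarrow> 'a list" where
  "kfilter w = map fst (filter (\<lambda>p. snd p = 1) w)"

definition dec :: "('a \<times> nat) list \<Rightarrow> 'a list" where
  "dec w = fst (hd w) # kfilter (tl w)"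

lemma kfilter_simps[simp]: "kfilter [] = []" "kfilter (xs @ ys) = kfilter xs @ kfilter ys"
  "kfilter (b # ys) = (if snd b = 1 then fst b # kfilter ys else kfilter ys)"
  by (auto simp: kfilter_def)

lemma pi_sig_alt: "pi_sig \<sigma> a = map (\<lambda>i. (a, Suc i)) [0..<length (\<sigma> a)]"
proof -
  have "[1..<length (\<sigma> a) + 1] = map Suc [0..<length (\<sigma> a)]"
    by (simp add: map_Suc_upt)
  then show ?thesis by (simp add: pi_sig_def del: upt_Suc)
qed

lemma length_pi_sig[simp]: "length (pi_sig \<sigma> a) = length (\<sigma> a)"
  by (simp add: pi_sig_alt)

lemma nth_pi_sig[simp]: "i < length (\<sigma> a) \<Longrightarrow> pi_sig \<sigma> a ! i = (a, Suc i)"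
  by (simp add: pi_sig_alt)

lemma pi_sig_Cons: "\<sigma> a \<noteq> [] \<Longrightarrow> pi_sig \<sigma> a = (a, 1) # drop 1 (pi_sig \<sigma> a)"
  by (metis One_nat_def Cons_nth_drop_Suc drop0 length_greater_0_conv length_pi_sig nth_pi_sig)

lemma drop_pi_sig: "k < length (\<sigma> a) \<Longrightarrow> drop k (pi_sig \<sigma> a) = (a, Suc k) # drop (Suc k) (pi_sig \<sigma> a)"
  by (metis Cons_nth_drop_Suc length_pi_sig nth_pi_sig)

lemma set_pi_sig: "set (pi_sig \<sigma> a) \<subseteq> Asig \<sigma>"
  by (auto simp: pi_sig_alt Asig_def)

lemma snd_set_pi_sig: "p \<in> set (pi_sig \<sigma> a) \<Longrightarrow> fst p = a \<and> 1 \<le> snd p \<and> snd p \<le> length (\<sigma> a)"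
  by (auto simp: pi_sig_alt)

lemma kfilter_drop1_pi_sig: "kfilter (drop (Suc 0) (pi_sig \<sigma> a)) = []"
proof -
  have "\<forall>x\<in>set (drop 1 (pi_sig \<sigma> a)). snd x \<noteq> 1" by (auto simp: in_set_conv_nth)
  then show ?thesis by (simp add: kfilter_def filter_empty_conv)
qed

lemma kfilter_pi_sig: "\<sigma> a \<noteq> [] \<Longrightarrow> kfilter (pi_sig \<sigma> a) = [a]"
  by (subst pi_sig_Cons) (auto simp: kfilter_drop1_pi_sig)

lemma succ_pi_sig: "successively (link \<sigma>) (pi_sig \<sigma> a)"
proof -
  have "successively (\<lambda>x y. y = Suc x) [0..<n]" for n
  proof (induction n)
    case (Suc n) then show ?case by (cases n) (auto simp: successively_append_iff)
  qed simp
  then show ?thesis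
    unfolding pi_sig_alt successively_map
    by (rule successively_mono) (auto simp: link_def)
qed

lemma last_pi_sig: "\<sigma> a \<noteq> [] \<Longrightarrow> last (pi_sig \<sigma> a) = (a, length (\<sigma> a))"
proof -
  assume ne: "\<sigma> a \<noteq> []"
  then have "pi_sig \<sigma> a \<noteq> []" by (metis length_0_conv length_pi_sig)
  then show ?thesis using ne by (simp add: last_conv_nth)
qed

lemma pi_word_simps[simp]: "pi_word \<sigma> [] = []" "pi_word \<sigma> (a # u) = pi_sig \<sigma> a @ pi_word \<sigma> u"
  "pi_word \<sigma> (u @ v) = pi_word \<sigma> u @ pi_word \<sigma> v"
  by (auto simp: pi_word_def)

lemma kfilter_pi_word: "non_erasing \<sigma> \<Longrightarrow> kfilter (pi_word \<sigma> u) = u"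
  by (induction u) (auto simp: kfilter_pi_sig non_erasing_def)

lemma hd_pi_word: "non_erasing \<sigma> \<Longrightarrow> u \<noteq> [] \<Longrightarrow> hd (pi_word \<sigma> u) = (hd u, 1)"
  by (cases u) (auto simp: non_erasing_def, subst pi_sig_Cons, auto)

lemma consw_pi_word: "non_erasing \<sigma> \<Longrightarrow> consw \<sigma> (pi_word \<sigma> u)"
proof (induction u)
  case Nil then show ?case by (simp add: consw_def)
next
  case (Cons a u)
  have ne: "\<sigma> a \<noteq> []" using Cons.prems by (simp add: non_erasing_def)
  have "link \<sigma> (last (pi_sig \<sigma> a)) (hd (pi_word \<sigma> u))" if "u \<noteq> []"
    using hd_pi_word[OF Cons.prems that] ne by (simp add: last_pi_sig link_def)
  then show ?case using Cons set_pi_sig[of \<sigma> a] succ_pi_sig[of \<sigma> a]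
    by (cases "u = []") (auto simp: consw_def successively_append_iff)
qed

lemma consw_sublist: "consw \<sigma> v \<Longrightarrow> sublist w v \<Longrightarrow> consw \<sigma> w"
  by (auto simp: consw_def sublist_def successively_append_iff)

lemma dec_snoc: "w \<noteq> [] \<Longrightarrow> dec (w @ [b]) = dec w @ (if snd b = 1 then [fst b] else [])"
  by (cases w) (auto simp: dec_def)

lemma consw_snoc: "w \<noteq> [] \<Longrightarrow> consw \<sigma> (w @ [b]) \<longleftrightarrow> consw \<sigma> w \<and> b \<in> Asig \<sigma> \<and> link \<sigma> (last w) b"
  by (auto simp: consw_def successively_append_iff)

lemma consw_Cons: "w \<noteq> [] \<Longrightarrow> consw \<sigma> (b # w) \<longleftrightarrow> consw \<sigma> w \<and> b \<in> Asig \<sigma> \<and> link \<sigma> b (hd w)"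
  by (auto simp: consw_def successively_Cons)

lemma Asig_iff: "p \<in> Asig \<sigma> \<longleftrightarrow> 1 \<le> snd p \<and> snd p \<le> length (\<sigma> (fst p))"
  by (cases p) (auto simp: Asig_def)

lemma dec_embed:
  assumes "consw \<sigma> w" "w \<noteq> []"
  shows "pi_word \<sigma> (dec w) = take (snd (hd w) - 1) (pi_sig \<sigma> (fst (hd w))) @ w
           @ drop (snd (last w)) (pi_sig \<sigma> (fst (last w)))"
  using assms
proof (induction w rule: rev_induct)
  case Nil then show ?case by simp
next
  case (snoc b w)
  show ?case
  proof (cases "w = []")
    case True
    obtain a k where b: "b = (a, k)" by force
    have "b \<in> Asig \<sigma>" using snoc.prems by (auto simp: consw_def)
    then have k: "1 \<le> k" "k \<le> length (\<sigma> a)" by (auto simp: Asig_def b)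
    have "pi_sig \<sigma> a = take (k - 1) (pi_sig \<sigma> a) @ drop (k - 1) (pi_sig \<sigma> a)" by simp
    also have "drop (k - 1) (pi_sig \<sigma> a) = (a, k) # drop k (pi_sig \<sigma> a)"
      using drop_pi_sig[of "k - 1" \<sigma> a] k by simp
    finally show ?thesis using True by (simp add: b dec_def)
  next
    case False
    have all3: "consw \<sigma> w \<and> b \<in> Asig \<sigma> \<and> link \<sigma> (last w) b"
      using snoc.prems(1) consw_snoc[OF False, of \<sigma> b] by blast
    then have cw: "consw \<sigma> w" and bA: "b \<in> Asig \<sigma>"
      and lk: "link \<sigma> (last w) b" by auto
    note IH = snoc.IH[OF cw False]
    have lA: "last w \<in> Asig \<sigma>" using cw False by (auto simp: consw_def)
    show ?thesis
    proof (cases "snd b = 1")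
      case True
      then have "snd (last w) = length (\<sigma> (fst (last w)))"
        using lk lA by (auto simp: link_def Asig_iff)
      then have "drop (snd (last w)) (pi_sig \<sigma> (fst (last w))) = []" by simp
      moreover have "pi_sig \<sigma> (fst b) = b # drop (snd b) (pi_sig \<sigma> (fst b))"
      proof -
        obtain c where bc: "b = (c, 1)" using True by (cases b) auto
        have "\<sigma> c \<noteq> []" using bA bc by (auto simp: Asig_iff)
        then show ?thesis using pi_sig_Cons[of \<sigma> c] bc by simp
      qed
      ultimately show ?thesis using IH False True
        by (simp add: dec_snoc)
    next
      case nt: False
      then have b: "fst b = fst (last w)" "snd b = Suc (snd (last w))"
        using lk by (auto simp: link_def)
      then have "drop (snd (last w)) (pi_sig \<sigma> (fst (last w))) = b # drop (snd b) (pi_sig \<sigma> (fst b))"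
        using bA drop_pi_sig[of "snd (last w)" \<sigma> "fst (last w)"] by (cases b) (auto simp: Asig_iff)
      then show ?thesis using IH False nt by (simp add: dec_snoc)
    qed
  qed
qed

lemma kfilter_last:
  assumes "successively (link \<sigma>) p" "p \<noteq> []" "snd (hd p) = 1"
  shows "kfilter p \<noteq> [] \<and> last (kfilter p) = fst (last p)"
  using assms
proof (induction p rule: rev_induct)
  case Nil then show ?case by simp
next
  case (snoc b p)
  show ?case
  proof (cases "p = []")
    case True then show ?thesis using snoc.prems by simp
  next
    case False
    have sp: "successively (link \<sigma>) p" and lk: "link \<sigma> (last p) b"
      using snoc.prems(1) False by (auto simp: successively_append_iff)
    have IH: "kfilter p \<noteq> [] \<and> last (kfilter p) = fst (last p)"
      using snoc.IH[OF sp False] snoc.prems(3) False by simp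
    show ?thesis
    proof (cases "snd b = 1")
      case True then show ?thesis by simp
    next
      case False
      then have "fst b = fst (last p)" using lk by (auto simp: link_def)
      then show ?thesis using IH False by simp
    qed
  qed
qed

lemma sublist_dec:
  assumes ne: "non_erasing \<sigma>" and sub: "sublist w (pi_word \<sigma> u)" and wne: "w \<noteq> []"
  shows "sublist (dec w) u"
proof -
  obtain p s where ps: "pi_word \<sigma> u = p @ w @ s" using sub by (auto simp: sublist_def)
  obtain b w' where bw: "w = b # w'" using wne by (cases w) auto
  have u_eq: "u = kfilter p @ kfilter w @ kfilter s"
    using kfilter_pi_word[OF ne, of u] ps by simp
  have une: "u \<noteq> []" using ps wne by auto
  have cw: "consw \<sigma> (pi_word \<sigma> u)" by (rule consw_pi_word[OF ne])
  show ?thesis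
  proof (cases "snd b = 1")
    case True
    then have "dec w = kfilter w" by (simp add: bw dec_def)
    then show ?thesis using u_eq by (metis sublist_appendI)
  next
    case False
    have pne: "p \<noteq> []"
    proof
      assume "p = []"
      then have "hd (pi_word \<sigma> u) = b" using ps bw by simp
      then show False using hd_pi_word[OF ne une] False by auto
    qed
    have succ: "successively (link \<sigma>) (p @ [b])"
      using cw ps bw by (auto simp: consw_def successively_append_iff)
    have "hd (p @ [b]) = hd (pi_word \<sigma> u)" using ps pne by simp
    then have "snd (hd (p @ [b])) = 1" using hd_pi_word[OF ne une] by simp
    from kfilter_last[OF succ _ this] have "kfilter p \<noteq> [] \<and> last (kfilter p) = fst b"
      using False by simp
    then obtain kp where kp: "kfilter p = kp @ [fst b]" by (metis append_butlast_last_id)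
    have "dec w = fst b # kfilter w" using False by (simp add: bw dec_def)
    then have "u = kp @ dec w @ kfilter s" using u_eq kp by simp
    then show ?thesis by (metis sublist_appendI)
  qed
qed

lemma sublist_len_eq: "sublist xs ys \<Longrightarrow> length ys \<le> length xs \<Longrightarrow> xs = ys"
  by (auto simp: sublist_def)

lemma hat_char:
  assumes ne: "non_erasing \<sigma>" and wne: "w \<noteq> []"
  shows "hat_measure \<sigma> \<mu> w = (if consw \<sigma> w then emeasure \<mu> (cyl (dec w)) else 0)"
proof (cases "consw \<sigma> w")
  case True
  have sd: "sublist w (pi_word \<sigma> (dec w))"
    using dec_embed[OF True wne] by (metis sublist_appendI)
  define u0 where "u0 = (ARG_MIN length u. sublist w (pi_word \<sigma> u))"
  have u0: "sublist w (pi_word \<sigma> u0)" "length u0 \<le> length (dec w)"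
    using arg_min_nat_lemma[of "\<lambda>u. sublist w (pi_word \<sigma> u)" "dec w" length, OF sd]
    unfolding u0_def using sd by auto
  have "sublist (dec w) u0" by (rule sublist_dec[OF ne u0(1) wne])
  then have "dec w = u0" using u0(2) by (rule sublist_len_eq)
  then show ?thesis using True sd unfolding hat_measure_def u0_def by auto
next
  case False
  have "\<not> sublist w (pi_word \<sigma> u)" for u
    using consw_sublist[OF consw_pi_word[OF ne]] False by blast
  then show ?thesis using False unfolding hat_measure_def by auto
qed

lemma dec_pi_word: "non_erasing \<sigma> \<Longrightarrow> v \<noteq> [] \<Longrightarrow> dec (pi_word \<sigma> v) = v"
proof (cases v)
  case (Cons a v')
  assume ne: "non_erasing \<sigma>"
  then have "\<sigma> a \<noteq> []" by (simp add: non_erasing_def)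
  then have eq: "pi_word \<sigma> v = (a, 1) # (drop (Suc 0) (pi_sig \<sigma> a) @ pi_word \<sigma> v')"
    using Cons pi_sig_Cons[of \<sigma> a] by (metis One_nat_def append_Cons pi_word_simps(2))
  show ?thesis unfolding dec_def eq using kfilter_pi_word[OF ne, of v'] kfilter_drop1_pi_sig[of \<sigma> a] Cons
    by simp
qed simp

definition wcyl :: "int \<Rightarrow> 'a list \<Rightarrow> (int \<Rightarrow> 'a) set" where
  "wcyl a w = {x. \<forall>i<length w. x (a + int i + 1) = w ! i}"

lemma wcyl0: "wcyl 0 w = cyl w" by (simp add: wcyl_def cyl_def)

lemma space_seq: "space seq_space = UNIV"
  by (simp add: seq_space_def space_PiM)

lemma wcyl_sets: "wcyl a w \<in> sets seq_space"
proof -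
  have "{x \<in> space seq_space. \<forall>i<length w. x (a + int i + 1) = w ! i} \<in> sets seq_space"
    unfolding seq_space_def by measurable
  then show ?thesis by (simp add: wcyl_def space_seq)
qed

lemma cyl_sets: "cyl w \<in> sets seq_space"
  using wcyl_sets[of 0 w] by (simp add: wcyl0)

lemma shift_wcyl: "shift -` wcyl a w = wcyl (a + 1) w"
  by (auto simp: wcyl_def shift_def algebra_simps)

lemma inv_measure_wcyl:
  assumes "\<mu> \<in> inv_measures X"
  shows "emeasure \<mu> (wcyl a w) = emeasure \<mu> (cyl w)"
proof -
  have s: "sets \<mu> = sets seq_space" and inv: "shift_invariant \<mu>" using assms by (auto simp: inv_measures_def)
  have step: "emeasure \<mu> (wcyl (b + 1) w) = emeasure \<mu> (wcyl b w)" for b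
    using inv wcyl_sets[of b w] s unfolding shift_invariant_def by (metis shift_wcyl)
  have "emeasure \<mu> (wcyl a w) = emeasure \<mu> (wcyl 0 w)"
  proof (induction a rule: int_induct[of _ 0])
    case base then show ?case by simp
  next
    case (step1 i) then show ?case using step[of i] by simp
  next
    case (step2 i) then show ?case using step[of "i - 1"] by simp
  qed
  then show ?thesis by (simp add: wcyl0)
qed

lemma cyl_snoc_union: "cyl u = (\<Union>c. cyl (u @ [c]))"
proof -
  have "x \<in> cyl u \<Longrightarrow> x \<in> cyl (u @ [x (int (length u) + 1)])" for x
    by (auto simp: cyl_def nth_append less_Suc_eq)
  moreover have "x \<in> cyl (u @ [c]) \<Longrightarrow> x \<in> cyl u" for x c
    by (auto simp: cyl_def nth_append)
  ultimately show ?thesis by blast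
qed

lemma inv_measure_snoc:
  assumes "\<mu> \<in> inv_measures X"
  shows "emeasure \<mu> (cyl u) = (\<Sum>c\<in>UNIV. emeasure \<mu> (cyl (u @ [c :: 'a :: finite])))"
proof -
  have s: "sets \<mu> = sets seq_space" using assms by (auto simp: inv_measures_def)
  have "(\<Sum>c\<in>UNIV. emeasure \<mu> (cyl (u @ [c :: 'a]))) = emeasure \<mu> (\<Union>c\<in>UNIV. cyl (u @ [c]))"
  proof (rule sum_emeasure)
    show "(\<lambda>c. cyl (u @ [c])) ` UNIV \<subseteq> sets \<mu>" using s cyl_sets by auto
    show "disjoint_family_on (\<lambda>c. cyl (u @ [c])) UNIV"
      by (auto simp: disjoint_family_on_def cyl_def nth_append)
  qed simp
  then show ?thesis using cyl_snoc_union[of u] by simp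
qed

lemma wcyl1_union: "wcyl 1 u = (\<Union>c. cyl (c # u))"
proof -
  have "x \<in> cyl (x 1 # u)" if "x \<in> wcyl 1 u" for x
  proof -
    have h: "\<forall>i<length u. x (int i + 2) = u ! i" using that by (simp add: wcyl_def algebra_simps)
    show ?thesis unfolding cyl_def
    proof (intro CollectI allI impI)
      fix i assume "i < length (x 1 # u)"
      then show "x (int i + 1) = (x 1 # u) ! i" using h[rule_format, of "i - 1"]
        by (cases i) (auto simp: algebra_simps)
    qed
  qed
  moreover have "x \<in> cyl (c # u) \<Longrightarrow> x \<in> wcyl 1 u" for x c
    by (auto simp: cyl_def wcyl_def algebra_simps)
  ultimately show ?thesis by blast
qed

lemma inv_measure_cons:
  assumes "\<mu> \<in> inv_measures X"
  shows "emeasure \<mu> (cyl u) = (\<Sum>c\<in>UNIV. emeasure \<mu> (cyl (c # u :: 'a :: finite list)))"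
proof -
  have s: "sets \<mu> = sets seq_space" using assms by (auto simp: inv_measures_def)
  have "(\<Sum>c\<in>UNIV. emeasure \<mu> (cyl (c # u :: 'a list))) = emeasure \<mu> (\<Union>c\<in>UNIV. cyl (c # u))"
  proof (rule sum_emeasure)
    show "(\<lambda>c. cyl (c # u)) ` UNIV \<subseteq> sets \<mu>" using s cyl_sets by auto
    show "disjoint_family_on (\<lambda>c. cyl (c # u)) UNIV"
      by (auto simp: disjoint_family_on_def cyl_def) (metis nth_Cons_0 of_nat_0 add_0 zero_less_Suc)
  qed simp
  then show ?thesis using wcyl1_union[of u] inv_measure_wcyl[OF assms, of 1 u] by simp
qed

lemma inv_measure_support:
  assumes "\<mu> \<in> inv_measures X" "emeasure \<mu> (cyl u) \<noteq> 0"
  shows "\<exists>x\<in>X. x \<in> cyl u"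
proof (rule ccontr)
  assume na: "\<not> (\<exists>x\<in>X. x \<in> cyl u)"
  have "AE x in \<mu>. x \<in> X" using assms(1) by (auto simp: inv_measures_def)
  then have "AE x in \<mu>. \<not> x \<in> cyl u" using na by (auto elim: AE_mp)
  then have "emeasure \<mu> {x \<in> space \<mu>. x \<in> cyl u} = 0" by (rule emeasure_eq_0_AE)
  moreover have "space \<mu> = UNIV" using assms(1) sets_eq_imp_space_eq[of \<mu> seq_space]
    by (auto simp: inv_measures_def space_seq)
  ultimately show False using assms(2) by simp
qed

lemma inv_measure_unique:
  fixes \<mu>1 \<mu>2 :: "(int \<Rightarrow> 'a :: finite) measure"
  assumes m1: "\<mu>1 \<in> inv_measures X" and m2: "\<mu>2 \<in> inv_measures Y"
    and eq: "\<And>v. emeasure \<mu>1 (cyl v) = emeasure \<mu>2 (cyl v)"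
  shows "\<mu>1 = \<mu>2"
proof (rule measure_eqI_PiM_infinite[where I = UNIV and M = "\<lambda>_. count_space UNIV"])
  show "sets \<mu>1 = sets (Pi\<^sub>M UNIV (\<lambda>_. count_space UNIV))"
    using m1 by (simp add: inv_measures_def seq_space_def)
  show "sets \<mu>2 = sets (Pi\<^sub>M UNIV (\<lambda>_. count_space UNIV))"
    using m2 by (simp add: inv_measures_def seq_space_def)
  show "finite_measure \<mu>1" using m1 by (simp add: inv_measures_def)
  fix A :: "int \<Rightarrow> 'a set" and J :: "int set"
  assume J: "finite J"
  have pe: "prod_emb UNIV (\<lambda>_. count_space UNIV) J (Pi\<^sub>E J A) = {x. \<forall>j\<in>J. x j \<in> A j}"
    by (auto simp: prod_emb_def space_PiM PiE_def Pi_def)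
  define m where "m = Max (insert 0 (abs ` J))"
  have mJ0: "\<bar>j\<bar> \<le> m" if "j \<in> J" for j
    unfolding m_def using J that by (intro Max_ge) auto
  have mJ: "\<And>j. j \<in> J \<Longrightarrow> - m \<le> j \<and> j \<le> m"
    using mJ0 by (metis abs_le_iff minus_le_iff)
  have m0: "0 \<le> m" using J unfolding m_def by (auto intro!: Max_ge)
  define a where "a = - m - 1"
  define n where "n = nat (2 * m + 1)"
  define W where "W = {w :: 'a list. length w = n \<and> (\<forall>i<n. a + int i + 1 \<in> J \<longrightarrow> w ! i \<in> A (a + int i + 1))}"
  have finW: "finite W"
    by (rule finite_subset[OF _ finite_lists_length_eq[of "UNIV :: 'a set" n]]) (auto simp: W_def)
  have Seq: "{x. \<forall>j\<in>J. x j \<in> A j} = (\<Union>w\<in>W. wcyl a w)"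
  proof
    show "{x. \<forall>j\<in>J. x j \<in> A j} \<subseteq> (\<Union>w\<in>W. wcyl a w)"
    proof
      fix x assume x: "x \<in> {x. \<forall>j\<in>J. x j \<in> A j}"
      define w where "w = map (\<lambda>i. x (a + int i + 1)) [0..<n]"
      have "w \<in> W" using x by (auto simp: w_def W_def)
      moreover have "x \<in> wcyl a w" by (auto simp: w_def wcyl_def)
      ultimately show "x \<in> (\<Union>w\<in>W. wcyl a w)" by blast
    qed
    show "(\<Union>w\<in>W. wcyl a w) \<subseteq> {x. \<forall>j\<in>J. x j \<in> A j}"
    proof clarify
      fix x w j assume w: "w \<in> W" and x: "x \<in> wcyl a w" and j: "j \<in> J"
      define i where "i = nat (j - a - 1)"
      have ij: "j = a + int i + 1" "i < n" using mJ[OF j] m0 by (auto simp: i_def a_def n_def)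
      then have "x j = w ! i" using x w by (auto simp: wcyl_def W_def)
      then show "x j \<in> A j" using w ij j by (auto simp: W_def)
    qed
  qed
  have disj: "disjoint_family_on (wcyl a) W"
    unfolding disjoint_family_on_def
  proof (intro ballI impI)
    fix w1 w2 assume w: "w1 \<in> W" "w2 \<in> W" "w1 \<noteq> w2"
    show "wcyl a w1 \<inter> wcyl a w2 = {}"
    proof (rule ccontr)
      assume "wcyl a w1 \<inter> wcyl a w2 \<noteq> {}"
      then obtain x where "x \<in> wcyl a w1" "x \<in> wcyl a w2" by blast
      then have "w1 = w2" using w by (auto simp: W_def wcyl_def intro!: nth_equalityI)
      then show False using w by simp
    qed
  qed
  have meas: "\<And>(\<mu> :: (int \<Rightarrow> 'a) measure) Z. \<mu> \<in> inv_measures Z \<Longrightarrow> emeasure \<mu> (\<Union>w\<in>W. wcyl a w) = (\<Sum>w\<in>W. emeasure \<mu> (cyl w))"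
  proof -
    fix \<mu> :: "(int \<Rightarrow> 'a) measure" and Z assume mu: "\<mu> \<in> inv_measures Z"
    have "emeasure \<mu> (\<Union>w\<in>W. wcyl a w) = (\<Sum>w\<in>W. emeasure \<mu> (wcyl a w))"
      using mu finW disj wcyl_sets by (intro sum_emeasure[symmetric]) (auto simp: inv_measures_def)
    also have "\<dots> = (\<Sum>w\<in>W. emeasure \<mu> (cyl w))" using inv_measure_wcyl[OF mu] by simp
    finally show "emeasure \<mu> (\<Union>w\<in>W. wcyl a w) = (\<Sum>w\<in>W. emeasure \<mu> (cyl w))" .
  qed
  show "emeasure \<mu>1 (prod_emb UNIV (\<lambda>_. count_space UNIV) J (Pi\<^sub>E J A)) =
        emeasure \<mu>2 (prod_emb UNIV (\<lambda>_. count_space UNIV) J (Pi\<^sub>E J A))"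
    unfolding pe Seq meas[OF m1] meas[OF m2] using eq by simp
qed

lemma pos_succ: "pos \<sigma> x (n + 1) = pos \<sigma> x n + int (length (\<sigma> (x n)))"
proof (cases "n \<ge> 1")
  case True
  have "{1..<n + 1} = insert n {1..<n}" using True by auto
  then show ?thesis using True by (simp add: pos_def)
next
  case False
  show ?thesis
  proof (cases "n = 0")
    case True then show ?thesis by (simp add: pos_def)
  next
    case False
    with \<open>\<not> n \<ge> 1\<close> have n: "n + 1 \<le> 0" by simp
    have "{n..0} = insert n {n+1..0}" using n by auto
    then show ?thesis using n by (simp add: pos_def)
  qed
qed

lemma pos_1[simp]: "pos \<sigma> x 1 = 0" by (simp add: pos_def)

lemma pos_unique:
  assumes "f 1 = 0" "\<And>n. f (n + 1) = f n + int (length (\<sigma> (x n)))"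
  shows "f n = pos \<sigma> x n"
proof (induction n rule: int_induct[of _ 1])
  case base then show ?case using assms by simp
next
  case (step1 i) then show ?case using assms(2)[of i] pos_succ[of \<sigma> x i] by simp
next
  case (step2 i) then show ?case using assms(2)[of "i - 1"] pos_succ[of \<sigma> x "i - 1"] by simp
qed

lemma pos_mono_diff:
  assumes ne: "non_erasing \<sigma>" and "m \<le> n"
  shows "pos \<sigma> x n - pos \<sigma> x m \<ge> n - m"
  using assms(2)
proof (induction n rule: int_ge_induct)
  case base then show ?case by simp
next
  case (step i)
  have "length (\<sigma> (x i)) \<ge> 1" using ne by (simp add: non_erasing_def Suc_le_eq)
  then show ?case using step pos_succ[of \<sigma> x i] by simp
qed

lemma pos_strict: "non_erasing \<sigma> \<Longrightarrow> m < n \<Longrightarrow> pos \<sigma> x m < pos \<sigma> x n"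
  using pos_mono_diff[of \<sigma> m n x] by simp

lemma pos_mono: "non_erasing \<sigma> \<Longrightarrow> m \<le> n \<Longrightarrow> pos \<sigma> x m \<le> pos \<sigma> x n"
  using pos_mono_diff[of \<sigma> m n x] by simp

definition blk :: "('a \<Rightarrow> 'b list) \<Rightarrow> (int \<Rightarrow> 'a) \<Rightarrow> int \<Rightarrow> int" where
  "blk \<sigma> x p = (THE n. pos \<sigma> x n < p \<and> p \<le> pos \<sigma> x (n + 1))"

lemma blk_exists:
  assumes ne: "non_erasing \<sigma>"
  shows "\<exists>n. pos \<sigma> x n < p \<and> p \<le> pos \<sigma> x (n + 1)"
proof (induction p rule: int_induct[of _ 1])
  case base
  have "length (\<sigma> (x 1)) \<ge> 1" using ne by (simp add: non_erasing_def Suc_le_eq)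
  then show ?case using pos_succ[of \<sigma> x 1] by (intro exI[of _ 1]) simp
next
  case (step1 i)
  then obtain n where n: "pos \<sigma> x n < i" "i \<le> pos \<sigma> x (n + 1)" by blast
  show ?case
  proof (cases "i + 1 \<le> pos \<sigma> x (n + 1)")
    case True then show ?thesis using n by (intro exI[of _ n]) simp
  next
    case False
    then have "pos \<sigma> x (n + 1) = i" using n by simp
    moreover have "pos \<sigma> x (n + 1) < pos \<sigma> x (n + 1 + 1)" by (rule pos_strict[OF ne]) simp
    ultimately show ?thesis by (intro exI[of _ "n + 1"]) simp
  qed
next
  case (step2 i)
  then obtain n where n: "pos \<sigma> x n < i" "i \<le> pos \<sigma> x (n + 1)" by blast
  show ?case
  proof (cases "pos \<sigma> x n < i - 1")
    case True then show ?thesis using n by (intro exI[of _ n]) simp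
  next
    case False
    then have "pos \<sigma> x n = i - 1" using n by simp
    moreover have "pos \<sigma> x (n - 1) < pos \<sigma> x n" by (rule pos_strict[OF ne]) simp
    ultimately show ?thesis by (intro exI[of _ "n - 1"]) simp
  qed
qed

lemma blk_uniq:
  assumes ne: "non_erasing \<sigma>"
    and "pos \<sigma> x n < p" "p \<le> pos \<sigma> x (n + 1)" "pos \<sigma> x n' < p" "p \<le> pos \<sigma> x (n' + 1)"
  shows "n = n'"
proof (rule ccontr)
  assume "n \<noteq> n'"
  then consider "n + 1 \<le> n'" | "n' + 1 \<le> n" by linarith
  then show False
  proof cases
    case 1 then show ?thesis using pos_mono[OF ne 1, of x] assms by simp
  next
    case 2 then show ?thesis using pos_mono[OF ne 2, of x] assms by simp
  qed
qed

lemma blk_prop: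
  assumes ne: "non_erasing \<sigma>"
  shows "pos \<sigma> x (blk \<sigma> x p) < p \<and> p \<le> pos \<sigma> x (blk \<sigma> x p + 1)"
proof -
  have u: "\<exists>!n. pos \<sigma> x n < p \<and> p \<le> pos \<sigma> x (n + 1)"
    using blk_exists[OF ne, of x p] blk_uniq[OF ne, of x _ p] by blast
  show ?thesis unfolding blk_def by (rule theI'[OF u])
qed

lemma blk_eq:
  assumes ne: "non_erasing \<sigma>" and "pos \<sigma> x n < p" "p \<le> pos \<sigma> x (n + 1)"
  shows "blk \<sigma> x p = n"
  using blk_prop[OF ne, of x p] blk_uniq[OF ne] assms by blast

definition Pt :: "('a \<Rightarrow> 'b list) \<Rightarrow> (int \<Rightarrow> 'a) \<Rightarrow> int \<Rightarrow> 'a \<times> nat" where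
  "Pt \<sigma> x p = (x (blk \<sigma> x p), nat (p - pos \<sigma> x (blk \<sigma> x p)))"

lemma sigmaZ_Pt:
  assumes ne: "non_erasing \<sigma>"
  shows "sigmaZ \<sigma> x p = alpha_sig \<sigma> (Pt \<sigma> x p)"
proof -
  have "p - pos \<sigma> x (blk \<sigma> x p) \<ge> 1" using blk_prop[OF ne, of x p] by simp
  then have "nat (p - pos \<sigma> x (blk \<sigma> x p)) - 1 = nat (p - pos \<sigma> x (blk \<sigma> x p) - 1)" by simp
  then show ?thesis unfolding sigmaZ_def Pt_def alpha_sig_def blk_def[symmetric] Let_def by simp
qed

lemma Pt_Asig:
  assumes ne: "non_erasing \<sigma>"
  shows "Pt \<sigma> x p \<in> Asig \<sigma>"
  using blk_prop[OF ne, of x p] pos_succ[of \<sigma> x "blk \<sigma> x p"]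
  by (auto simp: Pt_def Asig_def)

lemma blk_bound:
  assumes ne: "non_erasing \<sigma>"
  shows "\<bar>blk \<sigma> x p\<bar> \<le> \<bar>p\<bar>"
proof -
  define n where "n = blk \<sigma> x p"
  have b: "pos \<sigma> x n < p" "p \<le> pos \<sigma> x (n + 1)" using blk_prop[OF ne, of x p] by (auto simp: n_def)
  show ?thesis
  proof (cases "n \<ge> 1")
    case True
    then show ?thesis using pos_mono_diff[OF ne True, of x] b unfolding n_def[symmetric] by simp
  next
    case False
    then have n1: "n + 1 \<le> 1" by simp
    show ?thesis using pos_mono_diff[OF ne n1, of x] b False unfolding n_def[symmetric] by simp
  qed
qed

lemma pos_local:
  assumes "\<And>i. \<bar>i\<bar> \<le> R \<Longrightarrow> x i = y i" and "- R \<le> n" "n \<le> R + 1"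
  shows "pos \<sigma> x n = pos \<sigma> y n"
proof (cases "n \<ge> 1")
  case True
  have "(\<Sum>k\<in>{1..<n}. int (length (\<sigma> (x k)))) = (\<Sum>k\<in>{1..<n}. int (length (\<sigma> (y k))))"
    using assms by (intro sum.cong) auto
  then show ?thesis using True by (simp add: pos_def)
next
  case False
  have "(\<Sum>k\<in>{n..0}. int (length (\<sigma> (x k)))) = (\<Sum>k\<in>{n..0}. int (length (\<sigma> (y k))))"
    using assms by (intro sum.cong) auto
  then show ?thesis using False by (simp add: pos_def)
qed

lemma Pt_local:
  assumes ne: "non_erasing \<sigma>" and agree: "\<And>i. \<bar>i\<bar> \<le> \<bar>p\<bar> \<Longrightarrow> x i = y i"
  shows "Pt \<sigma> x p = Pt \<sigma> y p"
proof -
  define n where "n = blk \<sigma> x p"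
  have nb: "\<bar>n\<bar> \<le> \<bar>p\<bar>" using blk_bound[OF ne] n_def by simp
  have e1: "pos \<sigma> x n = pos \<sigma> y n" using nb by (intro pos_local[OF agree]) auto
  have e2: "pos \<sigma> x (n + 1) = pos \<sigma> y (n + 1)" using nb by (intro pos_local[OF agree]) auto
  have "blk \<sigma> y p = n" using blk_prop[OF ne, of x p] e1 e2 unfolding n_def[symmetric]
    by (intro blk_eq[OF ne]) auto
  then show ?thesis using e1 nb agree[of n] unfolding Pt_def n_def[symmetric] by simp
qed

lemma shift_pow: "(shift ^^ m) x = (\<lambda>i. x (i + int m))"
  by (induction m arbitrary: x) (auto simp: shift_def algebra_simps)

lemma pos_shift_pow:
  "pos \<sigma> ((shift ^^ m) x) n = pos \<sigma> x (n + int m) - pos \<sigma> x (1 + int m)"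
proof (rule pos_unique[symmetric])
  show "pos \<sigma> x (1 + int m) - pos \<sigma> x (1 + int m) = 0" by simp
  fix n
  show "pos \<sigma> x (n + 1 + int m) - pos \<sigma> x (1 + int m) =
        pos \<sigma> x (n + int m) - pos \<sigma> x (1 + int m) + int (length (\<sigma> ((shift ^^ m) x n)))"
    using pos_succ[of \<sigma> x "n + int m"] by (simp add: shift_pow algebra_simps)
qed

lemma blk_shift_pow:
  assumes ne: "non_erasing \<sigma>"
  shows "blk \<sigma> ((shift ^^ m) x) q = blk \<sigma> x (q + pos \<sigma> x (1 + int m)) - int m"
proof (rule blk_eq[OF ne])
  define n where "n = blk \<sigma> x (q + pos \<sigma> x (1 + int m))"
  have b: "pos \<sigma> x n < q + pos \<sigma> x (1 + int m)" "q + pos \<sigma> x (1 + int m) \<le> pos \<sigma> x (n + 1)"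
    using blk_prop[OF ne] n_def by auto
  show "pos \<sigma> ((shift ^^ m) x) (n - int m) < q"
    "q \<le> pos \<sigma> ((shift ^^ m) x) (n - int m + 1)"
    using b by (auto simp: pos_shift_pow algebra_simps)
qed

lemma Pt_shift_pow:
  assumes ne: "non_erasing \<sigma>"
  shows "Pt \<sigma> ((shift ^^ m) x) q = Pt \<sigma> x (q + pos \<sigma> x (1 + int m))"
proof -
  define n where "n = blk \<sigma> x (q + pos \<sigma> x (1 + int m))"
  have "Pt \<sigma> ((shift ^^ m) x) q = ((shift ^^ m) x (n - int m), nat (q - pos \<sigma> ((shift ^^ m) x) (n - int m)))"
    unfolding Pt_def blk_shift_pow[OF ne] n_def ..
  also have "\<dots> = (x n, nat (q + pos \<sigma> x (1 + int m) - pos \<sigma> x n))"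
    unfolding pos_shift_pow by (simp add: shift_pow)
  also have "\<dots> = Pt \<sigma> x (q + pos \<sigma> x (1 + int m))" unfolding Pt_def n_def ..
  finally show ?thesis .
qed

lemma subshift_shift_pow: "subshift X \<Longrightarrow> x \<in> X \<Longrightarrow> (shift ^^ m) x \<in> X"
proof (induction m)
  case (Suc m)
  have "shift ` X = X" using Suc.prems(1) by (simp add: subshift_def)
  then show ?case using Suc by (metis funpow.simps(2) comp_apply imageI)
qed simp

lemma subshift_unshift_pow: "subshift X \<Longrightarrow> x \<in> X \<Longrightarrow> \<exists>y\<in>X. (shift ^^ m) y = x"
proof (induction m arbitrary: x)
  case 0 then show ?case by (intro bexI[of _ x]) simp_all
next
  case (Suc m)
  then obtain y where y: "y \<in> X" "(shift ^^ m) y = x" by blast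
  have "X \<subseteq> shift ` X" using Suc.prems(1) by (simp add: subshift_def)
  then obtain z where z: "z \<in> X" "y = shift z" using y(1) by blast
  have "(shift ^^ Suc m) z = x" using y(2) z(2) by (simp add: funpow_Suc_right del: funpow.simps)
  then show ?case using z(1) by blast
qed

lemma normalize:
  assumes ne: "non_erasing \<sigma>" and X: "subshift X" and x: "x \<in> X"
  shows "\<exists>x'\<in>X. \<exists>c. (\<forall>q. Pt \<sigma> x' q = Pt \<sigma> x (q + c)) \<and> blk \<sigma> x' (p - c) = 1"
proof (cases "blk \<sigma> x p \<ge> 1")
  case True
  define m where "m = nat (blk \<sigma> x p - 1)"
  have m: "int m = blk \<sigma> x p - 1" using True by (simp add: m_def)
  show ?thesis
  proof (intro bexI[of _ "(shift ^^ m) x"] exI[of _ "pos \<sigma> x (1 + int m)"] conjI allI)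
    show "Pt \<sigma> ((shift ^^ m) x) q = Pt \<sigma> x (q + pos \<sigma> x (1 + int m))" for q
      by (rule Pt_shift_pow[OF ne])
    show "blk \<sigma> ((shift ^^ m) x) (p - pos \<sigma> x (1 + int m)) = 1"
      unfolding blk_shift_pow[OF ne] using m by simp
    show "(shift ^^ m) x \<in> X" by (rule subshift_shift_pow[OF X x])
  qed
next
  case False
  define k where "k = nat (1 - blk \<sigma> x p)"
  have k: "int k = 1 - blk \<sigma> x p" using False by (simp add: k_def)
  obtain y where y: "y \<in> X" "(shift ^^ k) y = x" using subshift_unshift_pow[OF X x] by blast
  define d where "d = pos \<sigma> y (1 + int k)"
  have Py: "Pt \<sigma> x q = Pt \<sigma> y (q + d)" for q using Pt_shift_pow[OF ne, of k y q] y d_def by simp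
  have By: "blk \<sigma> x q = blk \<sigma> y (q + d) - int k" for q using blk_shift_pow[OF ne, of k y q] y d_def by simp
  show ?thesis
  proof (intro bexI[of _ y] exI[of _ "- d"] conjI allI)
    show "Pt \<sigma> y q = Pt \<sigma> x (q + - d)" for q using Py[of "q - d"] by simp
    show "blk \<sigma> y (p - - d) = 1" using By[of p] k by simp
  qed (rule y(1))
qed

lemma Pt_block1:
  assumes ne: "non_erasing \<sigma>" and "0 < p" "p \<le> int (length (\<sigma> (x 1)))"
  shows "Pt \<sigma> x p = (x 1, nat p)"
proof -
  have "blk \<sigma> x p = 1" using assms pos_succ[of \<sigma> x 1] by (intro blk_eq[OF ne]) auto
  then show ?thesis by (simp add: Pt_def)
qed

lemma cyl_realize:
  assumes ne: "non_erasing \<sigma>"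
  shows "x \<in> cyl u \<Longrightarrow> i < length (pi_word \<sigma> u) \<Longrightarrow> pi_word \<sigma> u ! i = Pt \<sigma> x (1 + int i)"
proof (induction u arbitrary: x i)
  case Nil then show ?case by simp
next
  case (Cons a u)
  have xa: "x 1 = a" using Cons.prems(1) by (auto simp: cyl_def)
  have sx: "shift x \<in> cyl u" using Cons.prems(1)
    by (auto simp: cyl_def shift_def algebra_simps)
  show ?case
  proof (cases "i < length (\<sigma> a)")
    case True
    then show ?thesis using Pt_block1[OF ne, of "1 + int i" x] xa by (simp add: nth_append)
  next
    case False
    define j where "j = i - length (\<sigma> a)"
    have j: "i = j + length (\<sigma> a)" "j < length (pi_word \<sigma> u)" using False Cons.prems(2) by (auto simp: j_def)
    have "pi_word \<sigma> (a # u) ! i = pi_word \<sigma> u ! j" using j by (simp add: nth_append)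
    also have "\<dots> = Pt \<sigma> (shift x) (1 + int j)" using Cons.IH[OF sx j(2)] .
    also have "\<dots> = Pt \<sigma> x (1 + int j + pos \<sigma> x 2)" using Pt_shift_pow[OF ne, of 1 x "1 + int j"] by simp
    also have "pos \<sigma> x 2 = int (length (\<sigma> a))" using pos_succ[of \<sigma> x 1] xa by simp
    finally show ?thesis using j(1) by (simp add: add.assoc)
  qed
qed

lemma consw_realize:
  assumes ne: "non_erasing \<sigma>" and cw: "consw \<sigma> w" and wne: "w \<noteq> []" and x: "x \<in> cyl (dec w)"
    and i: "i < length w"
  shows "w ! i = Pt \<sigma> x (int (snd (hd w)) + int i)"
proof -
  have hA: "hd w \<in> Asig \<sigma>" using cw wne by (auto simp: consw_def)
  define pre where "pre = take (snd (hd w) - 1) (pi_sig \<sigma> (fst (hd w)))"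
  have lp: "length pre = snd (hd w) - 1" using hA by (auto simp: pre_def Asig_iff)
  have eq: "pi_word \<sigma> (dec w) = pre @ w @ drop (snd (last w)) (pi_sig \<sigma> (fst (last w)))"
    using dec_embed[OF cw wne] by (simp add: pre_def)
  have "w ! i = pi_word \<sigma> (dec w) ! (length pre + i)" using eq i by (simp add: nth_append)
  also have "\<dots> = Pt \<sigma> x (1 + int (length pre + i))"
    by (rule cyl_realize[OF ne x]) (simp add: eq i add_less_mono1 trans_less_add1)
  also have "1 + int (length pre + i) = int (snd (hd w)) + int i" using lp hA by (auto simp: Asig_iff)
  finally show ?thesis .
qed

lemma seq_pointwise_conv:
  fixes f :: "nat \<Rightarrow> int \<Rightarrow> 'c::finite"
  shows "\<exists>g r. strict_mono r \<and> (\<forall>i. eventually (\<lambda>n. f (r n) i = g i) sequentially)"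
proof -
  define e where "e = (to_nat :: 'c \<Rightarrow> nat)"
  have inje: "inj e" unfolding e_def by (rule inj_to_nat)
  define S where "S = range e"
  have finS: "finite S" unfolding S_def by simp
  define K where "K = PiE (UNIV :: int set) (\<lambda>_. S)"
  have "compactin (product_topology (\<lambda>_. euclidean) UNIV) K"
    unfolding K_def compactin_PiE using finS by (auto intro: finite_imp_compact)
  then have "compact K" unfolding euclidean_product_topology by simp
  then have sc: "seq_compact K" by (rule compact_imp_seq_compact)
  define F where "F n = (\<lambda>i. e (f n i))" for n
  have FK: "\<forall>n. F n \<in> K" by (auto simp: F_def K_def S_def)
  obtain l r where lK: "l \<in> K" and r: "strict_mono r" and lim: "(F \<circ> r) \<longlonglongrightarrow> l"
    using seq_compactE[OF sc FK] by blast
  have "eventually (\<lambda>n. F (r n) i = l i) sequentially" for i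
  proof -
    have "(\<lambda>n. (F \<circ> r) n i) \<longlonglongrightarrow> l i"
      using continuous_on_tendsto_compose[OF continuous_on_product_coordinates[of i, where 'b = nat] lim]
      by simp
    then show ?thesis by (simp add: tendsto_discrete comp_def)
  qed
  note ev = this
  have "l i \<in> range e" for i using lK by (auto simp: K_def S_def)
  then have le: "e (inv e (l i)) = l i" for i by (simp add: f_inv_into_f)
  have "eventually (\<lambda>n. f (r n) i = inv e (l i)) sequentially" for i
    using ev[of i] by (rule eventually_mono) (metis F_def le inje injD)
  then show ?thesis using r by (intro exI[of _ "\<lambda>i. inv e (l i)"] exI[of _ r]) blast
qed

definition badw :: "('a \<Rightarrow> 'b list) \<Rightarrow> (int \<Rightarrow> 'a) set \<Rightarrow> nat \<Rightarrow> nat \<Rightarrow> nat \<Rightarrow> (int \<Rightarrow> 'a) \<Rightarrow> (int \<Rightarrow> 'a) \<Rightarrow> bool" where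
  "badw \<sigma> X L j1 j2 x y \<longleftrightarrow> x \<in> X \<and> y \<in> X \<and> j1 < length (\<sigma> (x 1)) \<and> j2 < length (\<sigma> (y 1)) \<and>
     (\<forall>i. \<bar>i\<bar> \<le> int L \<longrightarrow> sigmaZ \<sigma> x (int j1 + 1 + i) = sigmaZ \<sigma> y (int j2 + 1 + i)) \<and>
     \<not> (x 1 = y 1 \<and> j1 = j2)"

lemma badw_mono: "badw \<sigma> X L' j1 j2 x y \<Longrightarrow> L \<le> L' \<Longrightarrow> badw \<sigma> X L j1 j2 x y"
  unfolding badw_def by (meson order_trans of_nat_le_iff)

lemma recog_window:
  fixes \<sigma> :: "'a::finite \<Rightarrow> 'b list"
  assumes ne: "non_erasing \<sigma>" and X: "subshift X" and R: "recognizable \<sigma> X"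
  shows "\<exists>L. \<forall>j1 j2 x y. \<not> badw \<sigma> X L j1 j2 x y"
proof (rule ccontr)
  assume "\<not> ?thesis"
  then have allbad: "\<forall>L. \<exists>j1 j2 x y. badw \<sigma> X L j1 j2 x y" by simp
  define K where "K = Max (range (\<lambda>a. length (\<sigma> a)))"
  have jK: "j1 < K \<and> j2 < K" if "badw \<sigma> X L j1 j2 x y" for L j1 j2 x y
  proof -
    have le: "length (\<sigma> a) \<le> K" for a unfolding K_def by (rule Max_ge) auto
    have "j1 < length (\<sigma> (x 1))" "j2 < length (\<sigma> (y 1))" using that unfolding badw_def by simp_all
    then show ?thesis using le[of "x 1"] le[of "y 1"] by linarith
  qed
  have "\<exists>j1 j2. \<forall>L. \<exists>x y. badw \<sigma> X L j1 j2 x y"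
  proof (rule ccontr)
    assume "\<not> ?thesis"
    then have "\<forall>j1 j2. \<exists>L. \<forall>x y. \<not> badw \<sigma> X L j1 j2 x y" by simp
    define Lf where "Lf j1 j2 = (SOME L. \<forall>x y. \<not> badw \<sigma> X L j1 j2 x y)" for j1 j2
    have Lf: "\<And>j1 j2 x y. \<not> badw \<sigma> X (Lf j1 j2) j1 j2 x y"
    proof -
      fix j1 j2 x y
      show "\<not> badw \<sigma> X (Lf j1 j2) j1 j2 x y"
        unfolding Lf_def using someI_ex[OF \<open>\<forall>j1 j2. \<exists>L. \<forall>x y. \<not> badw \<sigma> X L j1 j2 x y\<close>[rule_format, of j1 j2]]
        by blast
    qed
    define L0 where "L0 = Max ((\<lambda>(a, b). Lf a b) ` ({..<K} \<times> {..<K}))"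
    obtain j1 j2 x y where b: "badw \<sigma> X L0 j1 j2 x y" using allbad by meson
    have "Lf j1 j2 \<le> L0" using jK[OF b] unfolding L0_def by (intro Max_ge) auto
    then have "badw \<sigma> X (Lf j1 j2) j1 j2 x y" by (rule badw_mono[OF b])
    then show False using Lf by blast
  qed
  then obtain j1 j2 where ex: "\<forall>L. \<exists>x y. badw \<sigma> X L j1 j2 x y" by meson
  define xs where "xs L = (SOME x. \<exists>y. badw \<sigma> X L j1 j2 x y)" for L
  have exs: "\<exists>y. badw \<sigma> X L j1 j2 (xs L) y" for L
    unfolding xs_def by (rule someI_ex[OF ex[rule_format, of L]])
  define ys where "ys L = (SOME y. badw \<sigma> X L j1 j2 (xs L) y)" for L
  have bad: "badw \<sigma> X L j1 j2 (xs L) (ys L)" for L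
    unfolding ys_def by (rule someI_ex[OF exs])
  obtain g r where r: "strict_mono r"
    and ev0: "\<forall>i. eventually (\<lambda>n. (\<lambda>i. (xs (r n) i, ys (r n) i)) i = g i) sequentially"
    using seq_pointwise_conv[of "\<lambda>n i. (xs n i, ys n i)"] by blast
  have ev: "eventually (\<lambda>n. (xs (r n) i, ys (r n) i) = g i) sequentially" for i
    using ev0 by simp
  define x where "x = (\<lambda>i. fst (g i))"
  define y where "y = (\<lambda>i. snd (g i))"
  have evxy: "eventually (\<lambda>n. xs (r n) i = x i \<and> ys (r n) i = y i) sequentially" for i
    using ev[of i] by (rule eventually_mono) (metis x_def y_def fst_conv snd_conv)
  have evW: "eventually (\<lambda>n. \<forall>i\<in>{-R..R}. xs (r n) i = x i \<and> ys (r n) i = y i) sequentially" for R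
    using evxy by (intro eventually_ball_finite) auto
  have inX: "x \<in> X \<and> y \<in> X"
  proof -
    have sc: "seq_closed X" using X by (simp add: subshift_def)
    have "\<exists>z\<in>X. \<forall>i. \<bar>i\<bar> \<le> int n \<longrightarrow> z i = x i" "\<exists>z\<in>X. \<forall>i. \<bar>i\<bar> \<le> int n \<longrightarrow> z i = y i" for n
    proof -
      obtain N where "\<forall>m\<ge>N. \<forall>i\<in>{- int n..int n}. xs (r m) i = x i \<and> ys (r m) i = y i"
        using evW[of "int n"] unfolding eventually_sequentially by blast
      then have N: "\<forall>i\<in>{- int n..int n}. xs (r N) i = x i \<and> ys (r N) i = y i" by blast
      have "xs (r N) \<in> X" "ys (r N) \<in> X" using bad[of "r N"] unfolding badw_def by simp_all
      have N': "\<forall>i. \<bar>i\<bar> \<le> int n \<longrightarrow> xs (r N) i = x i \<and> ys (r N) i = y i"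
        using N by (simp add: abs_le_iff)
      then show "\<exists>z\<in>X. \<forall>i. \<bar>i\<bar> \<le> int n \<longrightarrow> z i = x i" "\<exists>z\<in>X. \<forall>i. \<bar>i\<bar> \<le> int n \<longrightarrow> z i = y i"
        using \<open>xs (r N) \<in> X\<close> \<open>ys (r N) \<in> X\<close> by blast+
    qed
    then show ?thesis using sc unfolding seq_closed_def by blast
  qed
  obtain N1 where "\<forall>m\<ge>N1. xs (r m) 1 = x 1 \<and> ys (r m) 1 = y 1"
    using evxy[of 1] unfolding eventually_sequentially by blast
  then have N1: "xs (r N1) 1 = x 1 \<and> ys (r N1) 1 = y 1" by blast
  have "j1 < length (\<sigma> (xs (r N1) 1))" "j2 < length (\<sigma> (ys (r N1) 1))"
    using bad[of "r N1"] unfolding badw_def by simp_all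
  then have j1x: "j1 < length (\<sigma> (x 1))" and j2y: "j2 < length (\<sigma> (y 1))" using N1 by simp_all
  have eqZ: "(shift ^^ j1) (sigmaZ \<sigma> x) = (shift ^^ j2) (sigmaZ \<sigma> y)"
  proof (rule ext)
    fix p :: int
    define i where "i = p - 1"
    define R where "R = \<bar>p\<bar> + int j1 + int j2"
    have "eventually (\<lambda>n. (\<forall>i\<in>{-R..R}. xs (r n) i = x i \<and> ys (r n) i = y i) \<and> nat \<bar>i\<bar> \<le> n) sequentially"
      using evW[of R] eventually_ge_at_top[of "nat \<bar>i\<bar>"] by (rule eventually_conj)
    then obtain n0 where "\<forall>m\<ge>n0. (\<forall>i\<in>{-R..R}. xs (r m) i = x i \<and> ys (r m) i = y i) \<and> nat \<bar>i\<bar> \<le> m"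
      unfolding eventually_sequentially by blast
    then have n: "\<forall>i\<in>{-R..R}. xs (r n0) i = x i \<and> ys (r n0) i = y i" "nat \<bar>i\<bar> \<le> n0" by blast+
    define n where "n = n0"
    have rn: "\<bar>i\<bar> \<le> int (r n)" using n(2) seq_suble[OF r, of n] unfolding n_def by linarith
    have agx: "x i' = xs (r n) i'" if "\<bar>i'\<bar> \<le> \<bar>p + int j1\<bar>" for i'
    proof -
      have "i' \<in> {-R..R}" using that by (auto simp: R_def abs_le_iff)
      then show ?thesis using n(1) unfolding n_def by auto
    qed
    have agy: "ys (r n) i' = y i'" if "\<bar>i'\<bar> \<le> \<bar>p + int j2\<bar>" for i'
    proof -
      have "i' \<in> {-R..R}" using that by (auto simp: R_def abs_le_iff)
      then show ?thesis using n(1) unfolding n_def by auto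
    qed
    have bw: "\<forall>i. \<bar>i\<bar> \<le> int (r n) \<longrightarrow> sigmaZ \<sigma> (xs (r n)) (int j1 + 1 + i) = sigmaZ \<sigma> (ys (r n)) (int j2 + 1 + i)"
      using bad[of "r n"] unfolding badw_def by blast
    have "sigmaZ \<sigma> x (p + int j1) = sigmaZ \<sigma> (xs (r n)) (p + int j1)"
      unfolding sigmaZ_Pt[OF ne] using Pt_local[OF ne agx] by simp
    also have "\<dots> = sigmaZ \<sigma> (ys (r n)) (p + int j2)"
      using bw[rule_format, OF rn] unfolding i_def by (simp add: algebra_simps)
    also have "\<dots> = sigmaZ \<sigma> y (p + int j2)"
      unfolding sigmaZ_Pt[OF ne] using Pt_local[OF ne agy] by simp
    finally show "(shift ^^ j1) (sigmaZ \<sigma> x) p = (shift ^^ j2) (sigmaZ \<sigma> y) p"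
      by (simp add: shift_pow)
  qed
  have "x = y \<and> j1 = j2"
    using R[unfolded recognizable_def, rule_format, of x y j1 j2] inX j1x j2y eqZ by blast
  moreover have "\<not> (xs (r N1) 1 = ys (r N1) 1 \<and> j1 = j2)" using bad[of "r N1"] unfolding badw_def by blast
  ultimately show False using N1 by simp
qed

lemma finite_Asig: "finite (Asig (\<sigma> :: 'a::finite \<Rightarrow> 'b list))"
proof -
  define K where "K = Max (range (\<lambda>a. length (\<sigma> a)))"
  have le: "length (\<sigma> a) \<le> K" for a unfolding K_def by (rule Max_ge) auto
  have "p \<in> UNIV \<times> {..K}" if "p \<in> Asig \<sigma>" for p
    using that le[of "fst p"] by (cases p) (simp add: Asig_def)
  then have "Asig \<sigma> \<subseteq> UNIV \<times> {..K}" by blast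
  then show ?thesis by (rule finite_subset) auto
qed

lemma dec_Cons: "dec (b # w) = fst b # kfilter w" by (simp add: dec_def)

lemma ext_right:
  fixes \<sigma> :: "'a::finite \<Rightarrow> 'b list"
  assumes mu: "\<mu> \<in> inv_measures X" and ne: "non_erasing \<sigma>" and wne: "w \<noteq> []"
  shows "(\<Sum>b\<in>Asig \<sigma>. hat_measure \<sigma> \<mu> (w @ [b])) = hat_measure \<sigma> \<mu> w"
proof (cases "consw \<sigma> w")
  case False
  then show ?thesis using wne by (simp add: hat_char[OF ne] consw_snoc)
next
  case True
  obtain a k where lw: "last w = (a, k)" by force
  have lA: "(a, k) \<in> Asig \<sigma>" using True wne lw by (auto simp: consw_def) (metis last_in_set subsetD)
  then have k: "1 \<le> k" "k \<le> length (\<sigma> a)" by (auto simp: Asig_def)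
  have H: "hat_measure \<sigma> \<mu> (w @ [b]) = (if b \<in> Asig \<sigma> \<and> link \<sigma> (a, k) b then
             emeasure \<mu> (cyl (dec w @ (if snd b = 1 then [fst b] else []))) else 0)" for b
    using True wne lw by (simp add: hat_char[OF ne] consw_snoc dec_snoc)
  show ?thesis
  proof (cases "k < length (\<sigma> a)")
    case True
    have "b \<in> Asig \<sigma> \<and> link \<sigma> (a, k) b \<longleftrightarrow> b = (a, Suc k)" for b
      using True k by (cases b) (auto simp: link_def Asig_def)
    then have "(\<Sum>b\<in>Asig \<sigma>. hat_measure \<sigma> \<mu> (w @ [b])) =
        (\<Sum>b\<in>Asig \<sigma>. if b = (a, Suc k) then emeasure \<mu> (cyl (dec w)) else 0)"
      using k by (intro sum.cong) (auto simp: H)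
    also have "\<dots> = emeasure \<mu> (cyl (dec w))"
      using True k by (subst sum.delta[OF finite_Asig]) (simp add: Asig_def)
    finally show ?thesis using \<open>consw \<sigma> w\<close> wne by (simp add: hat_char[OF ne])
  next
    case False
    then have kk: "k = length (\<sigma> a)" using k by simp
    have "b \<in> Asig \<sigma> \<and> link \<sigma> (a, k) b \<longleftrightarrow> b \<in> Asig \<sigma> \<and> snd b = 1" for b
      using kk by (cases b) (auto simp: link_def Asig_def)
    then have "(\<Sum>b\<in>Asig \<sigma>. hat_measure \<sigma> \<mu> (w @ [b])) =
        (\<Sum>b\<in>Asig \<sigma>. if snd b = 1 then emeasure \<mu> (cyl (dec w @ [fst b])) else 0)"
      by (intro sum.cong) (auto simp: H)
    also have "\<dots> = (\<Sum>b\<in>{b\<in>Asig \<sigma>. snd b = 1}. emeasure \<mu> (cyl (dec w @ [fst b])))"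
      by (simp add: sum.inter_filter finite_Asig)
    also have "{b\<in>Asig \<sigma>. snd b = 1} = (\<lambda>c. (c, 1)) ` UNIV"
      using ne by (auto simp: Asig_def non_erasing_def Suc_le_eq)
    also have "(\<Sum>b\<in>(\<lambda>c. (c, 1)) ` UNIV. emeasure \<mu> (cyl (dec w @ [fst b]))) =
        (\<Sum>c\<in>UNIV. emeasure \<mu> (cyl (dec w @ [c])))"
      by (subst sum.reindex) (auto simp: inj_on_def)
    also have "\<dots> = emeasure \<mu> (cyl (dec w))" by (rule inv_measure_snoc[OF mu, symmetric])
    finally show ?thesis using \<open>consw \<sigma> w\<close> wne by (simp add: hat_char[OF ne])
  qed
qed

lemma ext_left:
  fixes \<sigma> :: "'a::finite \<Rightarrow> 'b list"
  assumes mu: "\<mu> \<in> inv_measures X" and ne: "non_erasing \<sigma>" and wne: "w \<noteq> []"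
  shows "(\<Sum>b\<in>Asig \<sigma>. hat_measure \<sigma> \<mu> (b # w)) = hat_measure \<sigma> \<mu> w"
proof (cases "consw \<sigma> w")
  case False
  then show ?thesis using wne by (simp add: hat_char[OF ne] consw_Cons)
next
  case True
  obtain a k where hw: "hd w = (a, k)" by force
  have hA: "(a, k) \<in> Asig \<sigma>" using True wne hw by (auto simp: consw_def) (metis hd_in_set subsetD)
  then have k: "1 \<le> k" "k \<le> length (\<sigma> a)" by (auto simp: Asig_def)
  have H: "hat_measure \<sigma> \<mu> (b # w) = (if b \<in> Asig \<sigma> \<and> link \<sigma> b (a, k) then
             emeasure \<mu> (cyl (fst b # kfilter w)) else 0)" for b
    using True wne hw by (simp add: hat_char[OF ne] consw_Cons dec_Cons)
  show ?thesis
  proof (cases "k = 1")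
    case False
    have kf: "kfilter w = kfilter (tl w)" using False hw wne by (cases w) auto
    have dw: "dec w = a # kfilter w" using kf hw by (simp add: dec_def)
    have "b \<in> Asig \<sigma> \<and> link \<sigma> b (a, k) \<longleftrightarrow> b = (a, k - 1)" for b
      using False k by (cases b) (auto simp: link_def Asig_def)
    then have "(\<Sum>b\<in>Asig \<sigma>. hat_measure \<sigma> \<mu> (b # w)) =
        (\<Sum>b\<in>Asig \<sigma>. if b = (a, k - 1) then emeasure \<mu> (cyl (dec w)) else 0)"
      using dw by (intro sum.cong) (auto simp: H)
    also have "\<dots> = emeasure \<mu> (cyl (dec w))"
      using False k by (subst sum.delta[OF finite_Asig]) (auto simp: Asig_def)
    finally show ?thesis using \<open>consw \<sigma> w\<close> wne by (simp add: hat_char[OF ne])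
  next
    case True
    have dw: "kfilter w = dec w" using True hw wne by (cases w) (auto simp: dec_def)
    have "b \<in> Asig \<sigma> \<and> link \<sigma> b (a, k) \<longleftrightarrow> b \<in> Asig \<sigma> \<and> snd b = length (\<sigma> (fst b))" for b
      using True by (cases b) (auto simp: link_def Asig_def)
    then have "(\<Sum>b\<in>Asig \<sigma>. hat_measure \<sigma> \<mu> (b # w)) =
        (\<Sum>b\<in>Asig \<sigma>. if snd b = length (\<sigma> (fst b)) then emeasure \<mu> (cyl (fst b # dec w)) else 0)"
      using dw by (intro sum.cong) (auto simp: H)
    also have "\<dots> = (\<Sum>b\<in>{b\<in>Asig \<sigma>. snd b = length (\<sigma> (fst b))}. emeasure \<mu> (cyl (fst b # dec w)))"
      by (simp add: sum.inter_filter finite_Asig)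
    also have "{b\<in>Asig \<sigma>. snd b = length (\<sigma> (fst b))} = (\<lambda>c. (c, length (\<sigma> c))) ` UNIV"
      using ne by (auto simp: Asig_def non_erasing_def Suc_le_eq)
    also have "(\<Sum>b\<in>(\<lambda>c. (c, length (\<sigma> c))) ` UNIV. emeasure \<mu> (cyl (fst b # dec w))) =
        (\<Sum>c\<in>UNIV. emeasure \<mu> (cyl (c # dec w)))"
      by (subst sum.reindex) (auto simp: inj_on_def)
    also have "\<dots> = emeasure \<mu> (cyl (dec w))" by (rule inv_measure_cons[OF mu, symmetric])
    finally show ?thesis using \<open>consw \<sigma> w\<close> wne by (simp add: hat_char[OF ne])
  qed
qed

definition words :: "('a \<times> nat) set \<Rightarrow> nat \<Rightarrow> ('a \<times> nat) list set" where
  "words A n = {w. set w \<subseteq> A \<and> length w = n}"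

lemma finite_words: "finite A \<Longrightarrow> finite (words A n)"
  unfolding words_def by (rule finite_lists_length_eq)

lemma words_Suc_Cons: "words A (Suc n) = (\<lambda>(b, t). b # t) ` (A \<times> words A n)"
proof
  show "words A (Suc n) \<subseteq> (\<lambda>(b, t). b # t) ` (A \<times> words A n)"
  proof
    fix w assume "w \<in> words A (Suc n)"
    then obtain b t where "w = b # t" "b \<in> A" "t \<in> words A n" by (cases w) (auto simp: words_def)
    then show "w \<in> (\<lambda>(b, t). b # t) ` (A \<times> words A n)" by force
  qed
qed (auto simp: words_def)

lemma words_Suc_snoc: "words A (Suc n) = (\<lambda>(s, b). s @ [b]) ` (words A n \<times> A)"
proof
  show "words A (Suc n) \<subseteq> (\<lambda>(s, b). s @ [b]) ` (words A n \<times> A)"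
  proof
    fix w assume w: "w \<in> words A (Suc n)"
    then have "w \<noteq> []" by (auto simp: words_def)
    then obtain s b where "w = s @ [b]" by (metis append_butlast_last_id)
    then have "w = s @ [b]" "b \<in> A" "s \<in> words A n" using w by (auto simp: words_def)
    then show "w \<in> (\<lambda>(s, b). s @ [b]) ` (words A n \<times> A)" by force
  qed
qed (auto simp: words_def)

lemma iter_right:
  fixes \<sigma> :: "'a::finite \<Rightarrow> 'b list"
  assumes mu: "\<mu> \<in> inv_measures X" and ne: "non_erasing \<sigma>"
  shows "w \<noteq> [] \<Longrightarrow> (\<Sum>t\<in>words (Asig \<sigma>) n. hat_measure \<sigma> \<mu> (w @ t)) = hat_measure \<sigma> \<mu> w"
proof (induction n arbitrary: w)
  case 0
  have "words (Asig \<sigma>) 0 = {[]}" by (auto simp: words_def)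
  then show ?case by simp
next
  case (Suc n)
  have inj: "inj_on (\<lambda>(b, t). b # t) (Asig \<sigma> \<times> words (Asig \<sigma>) n)" by (auto simp: inj_on_def)
  have "(\<Sum>t\<in>words (Asig \<sigma>) (Suc n). hat_measure \<sigma> \<mu> (w @ t)) =
        (\<Sum>(b, t)\<in>Asig \<sigma> \<times> words (Asig \<sigma>) n. hat_measure \<sigma> \<mu> (w @ b # t))"
    unfolding words_Suc_Cons by (subst sum.reindex[OF inj]) (simp add: case_prod_unfold)
  also have "\<dots> = (\<Sum>b\<in>Asig \<sigma>. \<Sum>t\<in>words (Asig \<sigma>) n. hat_measure \<sigma> \<mu> ((w @ [b]) @ t))"
    by (subst sum.cartesian_product[symmetric]) simp
  also have "\<dots> = (\<Sum>b\<in>Asig \<sigma>. hat_measure \<sigma> \<mu> (w @ [b]))"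
    by (intro sum.cong refl Suc.IH) simp
  also have "\<dots> = hat_measure \<sigma> \<mu> w" by (rule ext_right[OF mu ne Suc.prems])
  finally show ?case .
qed

lemma iter_left:
  fixes \<sigma> :: "'a::finite \<Rightarrow> 'b list"
  assumes mu: "\<mu> \<in> inv_measures X" and ne: "non_erasing \<sigma>"
  shows "w \<noteq> [] \<Longrightarrow> (\<Sum>s\<in>words (Asig \<sigma>) n. hat_measure \<sigma> \<mu> (s @ w)) = hat_measure \<sigma> \<mu> w"
proof (induction n arbitrary: w)
  case 0
  have "words (Asig \<sigma>) 0 = {[]}" by (auto simp: words_def)
  then show ?case by simp
next
  case (Suc n)
  have inj: "inj_on (\<lambda>(s, b). s @ [b]) (words (Asig \<sigma>) n \<times> Asig \<sigma>)" by (auto simp: inj_on_def)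
  have "(\<Sum>s\<in>words (Asig \<sigma>) (Suc n). hat_measure \<sigma> \<mu> (s @ w)) =
        (\<Sum>(s, b)\<in>words (Asig \<sigma>) n \<times> Asig \<sigma>. hat_measure \<sigma> \<mu> (s @ b # w))"
    unfolding words_Suc_snoc by (subst sum.reindex[OF inj]) (simp add: case_prod_unfold)
  also have "\<dots> = (\<Sum>s\<in>words (Asig \<sigma>) n. \<Sum>b\<in>Asig \<sigma>. hat_measure \<sigma> \<mu> (s @ b # w))"
    by (subst sum.cartesian_product[symmetric]) simp
  also have "\<dots> = (\<Sum>b\<in>Asig \<sigma>. \<Sum>s\<in>words (Asig \<sigma>) n. hat_measure \<sigma> \<mu> (s @ b # w))"
    by (rule sum.swap)
  also have "\<dots> = (\<Sum>b\<in>Asig \<sigma>. hat_measure \<sigma> \<mu> (b # w))"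
    using Suc.IH by simp
  also have "\<dots> = hat_measure \<sigma> \<mu> w" by (rule ext_left[OF mu ne Suc.prems])
  finally show ?case .
qed

lemma cyl_as_sum:
  fixes \<sigma> :: "'a::finite \<Rightarrow> 'b list"
  assumes mu: "\<mu> \<in> inv_measures X" and ne: "non_erasing \<sigma>" and vne: "v \<noteq> []"
  shows "emeasure \<mu> (cyl v) = (\<Sum>w\<in>{w\<in>words (Asig \<sigma>) (L + length (pi_word \<sigma> v) + L).
            take (length (pi_word \<sigma> v)) (drop L w) = pi_word \<sigma> v}. hat_measure \<sigma> \<mu> w)"
proof -
  define c where "c = pi_word \<sigma> v"
  define N where "N = length c"
  have cc: "consw \<sigma> c" unfolding c_def by (rule consw_pi_word[OF ne])
  have cne: "c \<noteq> []" using kfilter_pi_word[OF ne, of v] vne unfolding c_def by auto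
  have cA: "set c \<subseteq> Asig \<sigma>" using cc by (simp add: consw_def)
  have "emeasure \<mu> (cyl v) = hat_measure \<sigma> \<mu> c"
    using hat_char[OF ne cne] cc dec_pi_word[OF ne vne] unfolding c_def by simp
  also have "\<dots> = (\<Sum>s\<in>words (Asig \<sigma>) L. hat_measure \<sigma> \<mu> (s @ c))"
    by (rule iter_left[OF mu ne cne, symmetric])
  also have "\<dots> = (\<Sum>s\<in>words (Asig \<sigma>) L. \<Sum>t\<in>words (Asig \<sigma>) L. hat_measure \<sigma> \<mu> ((s @ c) @ t))"
    using cne by (intro sum.cong refl iter_right[OF mu ne, symmetric]) simp
  also have "\<dots> = (\<Sum>(s, t)\<in>words (Asig \<sigma>) L \<times> words (Asig \<sigma>) L. hat_measure \<sigma> \<mu> (s @ c @ t))"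
    by (subst sum.cartesian_product) simp
  also have "\<dots> = (\<Sum>w\<in>(\<lambda>(s, t). s @ c @ t) ` (words (Asig \<sigma>) L \<times> words (Asig \<sigma>) L). hat_measure \<sigma> \<mu> w)"
  proof -
    have "inj_on (\<lambda>(s, t). s @ c @ t) (words (Asig \<sigma>) L \<times> words (Asig \<sigma>) L)"
      by (auto simp: inj_on_def words_def append_eq_append_conv)
    then show ?thesis by (subst sum.reindex) (auto simp: case_prod_unfold)
  qed
  also have "(\<lambda>(s, t). s @ c @ t) ` (words (Asig \<sigma>) L \<times> words (Asig \<sigma>) L) =
      {w\<in>words (Asig \<sigma>) (L + N + L). take N (drop L w) = c}"
  proof
    show "(\<lambda>(s, t). s @ c @ t) ` (words (Asig \<sigma>) L \<times> words (Asig \<sigma>) L) \<subseteq>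
        {w\<in>words (Asig \<sigma>) (L + N + L). take N (drop L w) = c}"
      using cA by (auto simp: words_def N_def)
    show "{w\<in>words (Asig \<sigma>) (L + N + L). take N (drop L w) = c} \<subseteq>
        (\<lambda>(s, t). s @ c @ t) ` (words (Asig \<sigma>) L \<times> words (Asig \<sigma>) L)"
    proof
      fix w assume w: "w \<in> {w\<in>words (Asig \<sigma>) (L + N + L). take N (drop L w) = c}"
      have e: "w = take L w @ take N (drop L w) @ drop N (drop L w)"
        by (metis append_take_drop_id)
      have "take L w \<in> words (Asig \<sigma>) L" "drop N (drop L w) \<in> words (Asig \<sigma>) L"
        using w by (auto simp: words_def dest: in_set_takeD in_set_dropD)
      then show "w \<in> (\<lambda>(s, t). s @ c @ t) ` (words (Asig \<sigma>) L \<times> words (Asig \<sigma>) L)"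
        using w e by (intro image_eqI[of _ _ "(take L w, drop N (drop L w))"]) auto
    qed
  qed
  finally show ?thesis unfolding c_def N_def .
qed

definition legal :: "('a \<Rightarrow> 'b list) \<Rightarrow> (int \<Rightarrow> 'a) set \<Rightarrow> ('a \<times> nat) list \<Rightarrow> bool" where
  "legal \<sigma> X w \<longleftrightarrow> (\<exists>x\<in>X. \<exists>q. \<forall>i<length w. w ! i = Pt \<sigma> x (q + int i))"

lemma H_legal:
  assumes mu: "\<mu> \<in> inv_measures X" and ne: "non_erasing \<sigma>" and wne: "w \<noteq> []"
    and H: "hat_measure \<sigma> \<mu> w \<noteq> 0"
  shows "legal \<sigma> X w"
proof -
  have cw: "consw \<sigma> w" and m: "emeasure \<mu> (cyl (dec w)) \<noteq> 0"
    using H hat_char[OF ne wne, of \<mu>] by (auto split: if_splits)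
  obtain x where x: "x \<in> X" "x \<in> cyl (dec w)" using inv_measure_support[OF mu m] by blast
  show ?thesis unfolding legal_def
    using consw_realize[OF ne cw wne x(2)] x(1) by blast
qed

lemma recog_pos:
  fixes \<sigma> :: "'a::finite \<Rightarrow> 'b list"
  assumes ne: "non_erasing \<sigma>" and X: "subshift X" and R: "recognizable \<sigma> X"
  shows "\<exists>L::nat. \<forall>x\<in>X. \<forall>y\<in>X. \<forall>p q. (\<forall>i. \<bar>i\<bar> \<le> int L \<longrightarrow> sigmaZ \<sigma> x (p + i) = sigmaZ \<sigma> y (q + i))
            \<longrightarrow> Pt \<sigma> x p = Pt \<sigma> y q"
proof -
  obtain L where L: "\<And>j1 j2 x y. \<not> badw \<sigma> X L j1 j2 x y" using recog_window[OF ne X R] by blast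
  have norm: "\<exists>x'\<in>X. \<exists>j. j < length (\<sigma> (x' 1)) \<and> Pt \<sigma> x p = (x' 1, Suc j) \<and>
      (\<forall>i. sigmaZ \<sigma> x' (int j + 1 + i) = sigmaZ \<sigma> x (p + i))" if x: "x \<in> X" for x p
  proof -
    obtain x' c where x': "x' \<in> X" "\<And>t. Pt \<sigma> x' t = Pt \<sigma> x (t + c)" "blk \<sigma> x' (p - c) = 1"
      using normalize[OF ne X x, of p] by blast
    have b: "0 < p - c" "p - c \<le> int (length (\<sigma> (x' 1)))"
      using blk_prop[OF ne, of x' "p - c"] x'(3) pos_succ[of \<sigma> x' 1] by auto
    define j where "j = nat (p - c - 1)"
    have j: "int j + 1 = p - c" using b by (simp add: j_def)
    have "Pt \<sigma> x p = Pt \<sigma> x' (p - c)" using x'(2)[of "p - c"] by simp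
    also have "\<dots> = (x' 1, nat (p - c))" by (rule Pt_block1[OF ne, of "p - c" x', OF b])
    also have "nat (p - c) = Suc j" using j by simp
    finally have e: "Pt \<sigma> x p = (x' 1, Suc j)" .
    have "sigmaZ \<sigma> x' (int j + 1 + i) = sigmaZ \<sigma> x (p + i)" for i
      unfolding sigmaZ_Pt[OF ne] x'(2) j by (simp add: algebra_simps)
    moreover have "j < length (\<sigma> (x' 1))" using j b by simp
    ultimately show ?thesis using x'(1) e by blast
  qed
  show ?thesis
  proof (intro exI[of _ L] ballI allI impI)
    fix x y p q
    assume x: "x \<in> X" and y: "y \<in> X"
      and win: "\<forall>i. \<bar>i\<bar> \<le> int L \<longrightarrow> sigmaZ \<sigma> x (p + i) = sigmaZ \<sigma> y (q + i)"
    obtain x' j1 where x': "x' \<in> X" "j1 < length (\<sigma> (x' 1))" "Pt \<sigma> x p = (x' 1, Suc j1)"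
      "\<And>i. sigmaZ \<sigma> x' (int j1 + 1 + i) = sigmaZ \<sigma> x (p + i)" using norm[OF x, of p] by blast
    obtain y' j2 where y': "y' \<in> X" "j2 < length (\<sigma> (y' 1))" "Pt \<sigma> y q = (y' 1, Suc j2)"
      "\<And>i. sigmaZ \<sigma> y' (int j2 + 1 + i) = sigmaZ \<sigma> y (q + i)" using norm[OF y, of q] by blast
    have "\<forall>i. \<bar>i\<bar> \<le> int L \<longrightarrow> sigmaZ \<sigma> x' (int j1 + 1 + i) = sigmaZ \<sigma> y' (int j2 + 1 + i)"
      using win x'(4) y'(4) by simp
    then have "x' 1 = y' 1 \<and> j1 = j2" using L[of j1 j2 x' y'] x' y' unfolding badw_def by blast
    then show "Pt \<sigma> x p = Pt \<sigma> y q" using x'(3) y'(3) by simp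
  qed
qed

lemma legal_core:
  fixes \<sigma> :: "'a::finite \<Rightarrow> 'b list"
  assumes ne: "non_erasing \<sigma>"
    and L: "\<forall>x\<in>X. \<forall>y\<in>X. \<forall>p q. (\<forall>i. \<bar>i\<bar> \<le> int L \<longrightarrow> sigmaZ \<sigma> x (p + i) = sigmaZ \<sigma> y (q + i))
            \<longrightarrow> Pt \<sigma> x p = Pt \<sigma> y q"
    and l1: "legal \<sigma> X w1" and l2: "legal \<sigma> X w2"
    and len1: "length w1 = L + N + L" and len2: "length w2 = L + N + L"
    and al: "map (alpha_sig \<sigma>) w1 = map (alpha_sig \<sigma>) w2"
  shows "take N (drop L w1) = take N (drop L w2)"
proof (rule nth_equalityI)
  show "length (take N (drop L w1)) = length (take N (drop L w2))" using len1 len2 by simp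
  obtain x1 q1 where x1: "x1 \<in> X" "\<And>i. i < length w1 \<Longrightarrow> w1 ! i = Pt \<sigma> x1 (q1 + int i)"
    using l1 unfolding legal_def by blast
  obtain x2 q2 where x2: "x2 \<in> X" "\<And>i. i < length w2 \<Longrightarrow> w2 ! i = Pt \<sigma> x2 (q2 + int i)"
    using l2 unfolding legal_def by blast
  fix t assume t: "t < length (take N (drop L w1))"
  then have tN: "t < N" using len1 by simp
  have win: "sigmaZ \<sigma> x1 (q1 + int (L + t) + i) = sigmaZ \<sigma> x2 (q2 + int (L + t) + i)"
    if i: "\<bar>i\<bar> \<le> int L" for i
  proof -
    define k where "k = nat (int (L + t) + i)"
    have k: "int k = int (L + t) + i" "k < length w1" "k < length w2"
      using i tN len1 len2 by (auto simp: k_def)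
    have "sigmaZ \<sigma> x1 (q1 + int (L + t) + i) = alpha_sig \<sigma> (w1 ! k)"
      unfolding sigmaZ_Pt[OF ne] x1(2)[OF k(2)] k(1) by (simp add: algebra_simps)
    also have "\<dots> = alpha_sig \<sigma> (w2 ! k)" using al k(2,3) by (metis nth_map)
    also have "\<dots> = sigmaZ \<sigma> x2 (q2 + int (L + t) + i)"
      unfolding sigmaZ_Pt[OF ne] x2(2)[OF k(3)] k(1) by (simp add: algebra_simps)
    finally show ?thesis .
  qed
  have "Pt \<sigma> x1 (q1 + int (L + t)) = Pt \<sigma> x2 (q2 + int (L + t))"
    using L x1(1) x2(1) win by blast
  then show "take N (drop L w1) ! t = take N (drop L w2) ! t"
    using x1(2)[of "L + t"] x2(2)[of "L + t"] tN len1 len2 by simp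
qed

theorem corollary3p9:
  fixes \<sigma> :: "'a::finite \<Rightarrow> 'b::finite list"
    and X :: "(int \<Rightarrow> 'a) set"
  assumes "non_erasing \<sigma>"
    and "subshift X"
    and "recognizable \<sigma> X"
    and "\<mu>1 \<in> inv_measures X" and "\<mu>2 \<in> inv_measures X"
    and "is_transfer \<sigma> \<mu>1 \<nu>" and "is_transfer \<sigma> \<mu>2 \<nu>"
  shows "\<mu>1 = \<mu>2"
proof -
  note ne = assms(1)
  obtain L where L: "\<forall>x\<in>X. \<forall>y\<in>X. \<forall>p q. (\<forall>i. \<bar>i\<bar> \<le> int L \<longrightarrow> sigmaZ \<sigma> x (p + i) = sigmaZ \<sigma> y (q + i))
            \<longrightarrow> Pt \<sigma> x p = Pt \<sigma> y q"
    using recog_pos[OF assms(1-3)] by blast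
  define A where "A = Asig \<sigma>"
  have finA: "finite A" unfolding A_def by (rule finite_Asig)
  define W' where "W' v = map (alpha_sig \<sigma>) ` {w\<in>words A (L + length (pi_word \<sigma> v) + L). legal \<sigma> X w \<and>
       take (length (pi_word \<sigma> v)) (drop L w) = pi_word \<sigma> v}" for v
  have key: "emeasure \<mu> (cyl v) = (\<Sum>w'\<in>W' v. emeasure \<nu> (cyl w'))"
    if mu: "\<mu> \<in> inv_measures X" and tr: "is_transfer \<sigma> \<mu> \<nu>" and vne: "v \<noteq> []" for \<mu> v
  proof -
    define c where "c = pi_word \<sigma> v"
    define N where "N = length c"
    define M where "M = L + N + L"
    define H where "H = hat_measure \<sigma> \<mu>"
    have cne: "c \<noteq> []" using kfilter_pi_word[OF ne, of v] vne unfolding c_def by auto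
    then have N1: "N \<ge> 1" unfolding N_def by (cases c) auto
    define Wd where "Wd = words A M"
    have finWd: "finite Wd" unfolding Wd_def by (rule finite_words[OF finA])
    define Sc where "Sc = {w\<in>Wd. take N (drop L w) = c}"
    define WW where "WW = W' v"
    have WW: "WW = map (alpha_sig \<sigma>) ` {w\<in>Wd. legal \<sigma> X w \<and> take N (drop L w) = c}"
      unfolding WW_def W'_def Wd_def M_def N_def c_def ..
    define S where "S = {w\<in>Wd. map (alpha_sig \<sigma>) w \<in> WW}"
    define Z where "Z = {w. H w \<noteq> 0}"
    have finSc: "finite Sc" and finS: "finite S" using finWd by (auto simp: Sc_def S_def)
    have finWW: "finite WW" using finWd unfolding WW by simp
    have wne: "w \<noteq> []" if "w \<in> Wd" for w using that N1 by (auto simp: Wd_def words_def M_def)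
    have SZ: "Sc \<inter> Z = S \<inter> Z"
    proof (intro equalityI subsetI)
      fix w assume w: "w \<in> Sc \<inter> Z"
      then have "w \<in> Wd" "legal \<sigma> X w" using H_legal[OF mu ne wne] by (auto simp: Sc_def Z_def H_def)
      then show "w \<in> S \<inter> Z" using w unfolding S_def WW Sc_def by auto
    next
      fix w assume w: "w \<in> S \<inter> Z"
      then have wW: "w \<in> Wd" and lw: "legal \<sigma> X w" using H_legal[OF mu ne wne] by (auto simp: S_def Z_def H_def)
      obtain w2 where w2: "w2 \<in> Wd" "legal \<sigma> X w2" "take N (drop L w2) = c"
        "map (alpha_sig \<sigma>) w2 = map (alpha_sig \<sigma>) w"
        using w unfolding S_def WW by auto
      have "take N (drop L w) = take N (drop L w2)"
        using legal_core[OF ne L lw w2(2), of N] wW w2(1) w2(4)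
        by (auto simp: Wd_def words_def M_def)
      then show "w \<in> Sc \<inter> Z" using w2(3) wW w by (auto simp: Sc_def)
    qed
    have "emeasure \<mu> (cyl v) = sum H Sc"
      using cyl_as_sum[OF mu ne vne, of L] unfolding H_def Sc_def Wd_def M_def N_def c_def A_def .
    also have "\<dots> = sum H (Sc \<inter> Z)"
      by (rule sum.mono_neutral_right[OF finSc]) (auto simp: Z_def)
    also have "\<dots> = sum H (S \<inter> Z)" using SZ by simp
    also have "\<dots> = sum H S"
      by (rule sum.mono_neutral_right[OF finS, symmetric]) (auto simp: Z_def)
    also have "\<dots> = (\<Sum>w'\<in>WW. sum H {w. w \<in> S \<and> map (alpha_sig \<sigma>) w = w'})"
      by (rule sum.group[OF finS finWW, symmetric]) (auto simp: S_def)
    also have "\<dots> = (\<Sum>w'\<in>WW. emeasure \<nu> (cyl w'))"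
    proof (rule sum.cong[OF refl])
      fix w' assume w': "w' \<in> WW"
      then have lw': "length w' = M" unfolding WW by (auto simp: Wd_def words_def)
      then have w'ne: "w' \<noteq> []" using N1 unfolding M_def by auto
      have "{w. w \<in> S \<and> map (alpha_sig \<sigma>) w = w'} = {w. set w \<subseteq> Asig \<sigma> \<and> map (alpha_sig \<sigma>) w = w'}"
        using w' lw' by (auto simp: S_def Wd_def words_def A_def dest: arg_cong[where f = length])
      then show "sum H {w. w \<in> S \<and> map (alpha_sig \<sigma>) w = w'} = emeasure \<nu> (cyl w')"
        using tr w'ne unfolding is_transfer_def H_def by simp
    qed
    finally show ?thesis unfolding WW_def .
  qed
  have ne_eq: "emeasure \<mu>1 (cyl v) = emeasure \<mu>2 (cyl v)" if "v \<noteq> []" for v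
    using key[OF assms(4,6) that] key[OF assms(5,7) that] by simp
  have all_eq: "emeasure \<mu>1 (cyl v) = emeasure \<mu>2 (cyl v)" for v
  proof (cases "v = []")
    case True
    then show ?thesis using inv_measure_snoc[OF assms(4), of v] inv_measure_snoc[OF assms(5), of v] ne_eq
      by simp
  qed (rule ne_eq)
  show ?thesis by (rule inv_measure_unique[OF assms(4,5) all_eq])
qed

end
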